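(* Consider $n$-qubit circuits (one target and several traps) whose noisy output states, before an ideal measurement of every qubit in the Pauli-$Z$ basis, have the form $$\widetilde\rho^{(k)}_{\mathrm{out}}=\sum_{\mathcal{P}_0,\ldots,\mathcal{P}_m}q_0(\mathcal{P}_0)\cdots q_m(\mathcal{P}_m)\,\mathcal{P}_m\,c\mathcal{Z}_m\mathcal{U}^{(k)}_m\cdots\mathcal{P}_1\,c\mathcal{Z}_1\mathcal{U}^{(k)}_1\,\mathcal{P}_0\big(|0\rangle\langle0|^{\otimes n}\big),$$ where the distributions $q_j$ on $n$-qubit Pauli channels and the cycles $c\mathcal{Z}_j$ are the same for all circuits $k$, and only the one-qubit cycles $\mathcal{U}^{(k)}_j$ differ. Let $p_{\mathrm{err}}=\sum_{(\mathcal{P}_0,\dots,\mathcal{P}_m)\neq(\mathcal{I},\dots,\mathcal{I})}\prod_j q_j(\mathcal{P}_j)$. For a trap circuit (one whose ideal output is the all-zero string with certainty, with random Clifford one-qubit cycles), let $p_{\mathrm{inc}}$ be the probability that its measured output differs from $(0,\dots,0)$, averaged over the random one-qubit gates and the errors, and let $p_{\mathrm{canc}}<1$ be the conditional probability, given a non-identity pattern, that the pattern's merged net Pauli error is the identity. Assume that whenever the merged net error of a trap is a non-identity Pauli, the trap returns an incorrect output with probability at least $1/2$ (averaged over its random one-qubit gates). Then $$p_{\mathrm{inc}}\ge\frac{p_{\mathrm{err}}(1-p_{\mathrm{canc}})}{2},$$ and, letting $p_{\mathrm{ideal}}$ and $p_{\mathrm{exp}}$ be the $Z$-basis output distributions of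 the target circuit in the noiseless case (all $\mathcal{P}_j=\mathcal{I}$) and the noisy case respectively, $$\mathrm{VD}:=\frac12\sum_{\bar s}\big|p_{\mathrm{ideal}}(\bar s)-p_{\mathrm{exp}}(\bar s)\big|\le p_{\mathrm{err}}\le\frac{2p_{\mathrm{inc}}}{1-p_{\mathrm{canc}}}.$$ Moreover $2p_{\mathrm{inc}}\le 2p_{\mathrm{err}}$.
   Context: Here $c\mathcal{Z}_j$ is a cycle of controlled-$Z$ gates ($cZ=|0\rangle\langle0|\otimes I+|1\rangle\langle1|\otimes Z$) and $\mathcal{U}^{(k)}_j$ a cycle of one-qubit gates; channels compose right-to-left, and $\bar s\in\{0,1\}^n$ ranges over output bit strings. For trap circuits all one-qubit gates are Clifford, so a Pauli error pattern $(\mathcal{P}_0,\dots,\mathcal{P}_m)$ can be commuted through the circuit and merged into a single Pauli error at one cycle (its "merged net error"). The error distribution is assumed identical for target and traps (gate-independent noise on one-qubit cycles, randomized to Pauli noise by a quantum one-time pad). *)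

theory Defs
  imports "Jordan_Normal_Form.Matrix" "HOL-Probability.Probability_Mass_Function"
begin

text \<open>Computational basis of n qubits: indices b < 2^n; bit i of b is the value of qubit i.\<close>

definition bitval :: "nat \<Rightarrow> nat \<Rightarrow> nat" where
  "bitval b i = (if bit b i then 1 else 0)"

definition dagger :: "complex mat \<Rightarrow> complex mat" where
  "dagger A = Matrix.mat (dim_col A) (dim_row A) (\<lambda>(i,j). cnj (A $$ (j,i)))"

text \<open>n-qubit Pauli operators, labelled by (x,z) with x,z < 2^n: the operator
  X^x Z^z (tensor product over qubits). Global phases are irrelevant for the
  Pauli channel rho -> P rho P^dagger, so this covers all of I,X,Y,Z per qubit.\<close>
definition paulis :: "nat \<Rightarrow> (nat \<times> nat) set" where
  "paulis n = {0..<2^n} \<times> {0..<2^n}"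

definition pauli :: "nat \<Rightarrow> nat \<times> nat \<Rightarrow> complex mat" where
  "pauli n e = Matrix.mat (2^n) (2^n) (\<lambda>(a,b).
      if a = xor b (fst e) then (-1) ^ card {i. i < n \<and> bit b i \<and> bit (snd e) i} else 0)"

text \<open>A cycle of controlled-Z gates, given by its set of (unordered) qubit pairs;
  the gates act on pairwise disjoint qubits.\<close>
definition cz_cycle :: "nat \<Rightarrow> (nat \<times> nat) set \<Rightarrow> bool" where
  "cz_cycle n E \<longleftrightarrow> (\<forall>(i,j)\<in>E. i < n \<and> j < n \<and> i \<noteq> j) \<and>
     (\<forall>(i,j)\<in>E. \<forall>(k,l)\<in>E. (i,j) \<noteq> (k,l) \<longrightarrow> {i,j} \<inter> {k,l} = {})"

definition cz_mat :: "nat \<Rightarrow> (nat \<times> nat) set \<Rightarrow> complex mat" where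
  "cz_mat n E = Matrix.mat (2^n) (2^n) (\<lambda>(a,b).
      if a = b then (-1) ^ card {(i,j)\<in>E. bit a i \<and> bit a j} else 0)"

definition one_qubit_unitary :: "complex mat \<Rightarrow> bool" where
  "one_qubit_unitary U \<longleftrightarrow> U \<in> carrier_mat 2 2 \<and> U * dagger U = 1\<^sub>m 2"

definition pX :: "complex mat" where "pX = mat_of_rows_list 2 [[0,1],[1,0]]"
definition pY :: "complex mat" where "pY = mat_of_rows_list 2 [[0,-\<i>],[\<i>,0]]"
definition pZ :: "complex mat" where "pZ = mat_of_rows_list 2 [[1,0],[0,-1]]"

definition one_qubit_clifford :: "complex mat \<Rightarrow> bool" where
  "one_qubit_clifford U \<longleftrightarrow> one_qubit_unitary U \<and>
     (\<forall>P\<in>{pX,pY,pZ}. \<exists>Q\<in>{pX,pY,pZ}. \<exists>s\<in>{1,-1::complex}. U * P * dagger U = s \<cdot>\<^sub>m Q)"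

text \<open>A cycle of one-qubit gates u i (on qubit i < n), as a 2^n x 2^n matrix
  (tensor product).\<close>
definition cycle_mat :: "nat \<Rightarrow> (nat \<Rightarrow> complex mat) \<Rightarrow> complex mat" where
  "cycle_mat n u = Matrix.mat (2^n) (2^n) (\<lambda>(a,b). \<Prod>i<n. u i $$ (bitval a i, bitval b i))"

text \<open>Operator of the circuit with error pattern Ps (Ps j = Pauli after cycle j,
  Ps 0 = error on the input), up to cycle j:
  P_j cZ_j U_j ... P_1 cZ_1 U_1 P_0.  u j = one-qubit cycle j (j = 1..m).\<close>
primrec circ_op :: "nat \<Rightarrow> (nat \<Rightarrow> (nat \<times> nat) set) \<Rightarrow> (nat \<Rightarrow> nat \<Rightarrow> complex mat)
    \<Rightarrow> (nat \<Rightarrow> nat \<times> nat) \<Rightarrow> nat \<Rightarrow> complex mat" where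
  "circ_op n E u Ps 0 = pauli n (Ps 0)"
| "circ_op n E u Ps (Suc j) =
     pauli n (Ps (Suc j)) * cz_mat n (E (Suc j)) * cycle_mat n (u (Suc j)) * circ_op n E u Ps j"

definition no_err :: "nat \<Rightarrow> nat \<times> nat" where "no_err = (\<lambda>_. (0,0))"

definition ideal_op :: "nat \<Rightarrow> (nat \<Rightarrow> (nat \<times> nat) set) \<Rightarrow> (nat \<Rightarrow> nat \<Rightarrow> complex mat)
    \<Rightarrow> nat \<Rightarrow> complex mat" where
  "ideal_op n E u m = circ_op n E u no_err m"

definition rho0 :: "nat \<Rightarrow> complex mat" where
  "rho0 n = Matrix.mat (2^n) (2^n) (\<lambda>(a,b). if a = 0 \<and> b = 0 then 1 else 0)"

definition patterns :: "nat \<Rightarrow> nat \<Rightarrow> (nat \<Rightarrow> nat \<times> nat) set" where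
  "patterns n m = PiE {0..m} (\<lambda>_. paulis n)"

definition pat_prob :: "(nat \<Rightarrow> (nat \<times> nat) \<Rightarrow> real) \<Rightarrow> nat \<Rightarrow> (nat \<Rightarrow> nat \<times> nat) \<Rightarrow> real" where
  "pat_prob q m Ps = (\<Prod>j\<le>m. q j (Ps j))"

definition nonid_pattern :: "nat \<Rightarrow> (nat \<Rightarrow> nat \<times> nat) \<Rightarrow> bool" where
  "nonid_pattern m Ps \<longleftrightarrow> (\<exists>j\<le>m. Ps j \<noteq> (0,0))"

definition p_err :: "nat \<Rightarrow> nat \<Rightarrow> (nat \<Rightarrow> (nat \<times> nat) \<Rightarrow> real) \<Rightarrow> real" where
  "p_err n m q = (\<Sum>Ps\<in>{Ps\<in>patterns n m. nonid_pattern m Ps}. pat_prob q m Ps)"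

definition noisy_out :: "nat \<Rightarrow> nat \<Rightarrow> (nat \<Rightarrow> (nat \<times> nat) \<Rightarrow> real) \<Rightarrow> (nat \<Rightarrow> (nat \<times> nat) set)
    \<Rightarrow> (nat \<Rightarrow> nat \<Rightarrow> complex mat) \<Rightarrow> complex mat" where
  "noisy_out n m q E u = Matrix.mat (2^n) (2^n) (\<lambda>(a,b).
     \<Sum>Ps\<in>patterns n m. complex_of_real (pat_prob q m Ps) *
        (circ_op n E u Ps m * rho0 n * dagger (circ_op n E u Ps m)) $$ (a,b))"

definition ideal_out :: "nat \<Rightarrow> nat \<Rightarrow> (nat \<Rightarrow> (nat \<times> nat) set)
    \<Rightarrow> (nat \<Rightarrow> nat \<Rightarrow> complex mat) \<Rightarrow> complex mat" where
  "ideal_out n m E u = ideal_op n E u m * rho0 n * dagger (ideal_op n E u m)"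

definition outprob :: "complex mat \<Rightarrow> nat \<Rightarrow> real" where
  "outprob rho s = Re (rho $$ (s,s))"

definition inc_prob :: "nat \<Rightarrow> nat \<Rightarrow> (nat \<Rightarrow> (nat \<times> nat) set) \<Rightarrow> (nat \<Rightarrow> nat \<Rightarrow> complex mat)
    \<Rightarrow> (nat \<Rightarrow> nat \<times> nat) \<Rightarrow> real" where
  "inc_prob n m E u Ps = (\<Sum>s\<in>{1..<2^n}.
      outprob (circ_op n E u Ps m * rho0 n * dagger (circ_op n E u Ps m)) s)"

text \<open>Merged net error: the Pauli e such that the noisy circuit operator equals
  (up to a global phase) the Pauli e applied after the ideal circuit operator,
  i.e. all errors commuted to the final cycle (well defined for Clifford circuits).\<close>
definition net_error :: "nat \<Rightarrow> nat \<Rightarrow> (nat \<Rightarrow> (nat \<times> nat) set) \<Rightarrow> (nat \<Rightarrow> nat \<Rightarrow> complex mat)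
    \<Rightarrow> (nat \<Rightarrow> nat \<times> nat) \<Rightarrow> nat \<times> nat" where
  "net_error n m E u Ps = (SOME e. e \<in> paulis n \<and>
      (\<exists>c. cmod c = 1 \<and> circ_op n E u Ps m = c \<cdot>\<^sub>m (pauli n e * ideal_op n E u m)))"

definition p_inc :: "nat \<Rightarrow> nat \<Rightarrow> (nat \<Rightarrow> (nat \<times> nat) \<Rightarrow> real) \<Rightarrow> (nat \<Rightarrow> (nat \<times> nat) set)
    \<Rightarrow> (nat \<Rightarrow> nat \<Rightarrow> complex mat) pmf \<Rightarrow> real" where
  "p_inc n m q E mu = measure_pmf.expectation mu (\<lambda>u.
      \<Sum>Ps\<in>patterns n m. pat_prob q m Ps * inc_prob n m E u Ps)"

definition p_canc :: "nat \<Rightarrow> nat \<Rightarrow> (nat \<Rightarrow> (nat \<times> nat) \<Rightarrow> real) \<Rightarrow> (nat \<Rightarrow> (nat \<times> nat) set)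
    \<Rightarrow> (nat \<Rightarrow> nat \<Rightarrow> complex mat) pmf \<Rightarrow> real" where
  "p_canc n m q E mu = measure_pmf.expectation mu (\<lambda>u.
      \<Sum>Ps\<in>{Ps\<in>patterns n m. nonid_pattern m Ps \<and> net_error n m E u Ps = (0,0)}.
         pat_prob q m Ps) / p_err n m q"

end

theory Submission imports Defs "Jordan_Normal_Form.Determinant" begin


lemma dagger_carrier[simp]: "dagger A \<in> carrier_mat (dim_col A) (dim_row A)"
  by (simp add: dagger_def)
lemma dagger_dims[simp]: "dim_row (dagger A) = dim_col A" "dim_col (dagger A) = dim_row A"
  by (simp_all add: dagger_def)
lemma dagger_index[simp]: "i < dim_col A \<Longrightarrow> j < dim_row A \<Longrightarrow> dagger A $$ (i,j) = cnj (A $$ (j,i))"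
  by (simp add: dagger_def)

lemma dagger_mult:
  assumes "A \<in> carrier_mat k l" "B \<in> carrier_mat l r"
  shows "dagger (A * B) = dagger B * dagger A"
  apply (rule eq_matI)
  using assms by (auto simp: scalar_prod_def mult.commute intro!: sum.cong)

definition isoM :: "nat \<Rightarrow> complex mat \<Rightarrow> bool" where
  "isoM N A \<longleftrightarrow> A \<in> carrier_mat N N \<and> dagger A * A = 1\<^sub>m N"

lemma iso_mult:
  assumes "isoM N A" "isoM N B" shows "isoM N (A * B)"
proof -
  have A: "A \<in> carrier_mat N N" and B: "B \<in> carrier_mat N N"
    and a: "dagger A * A = 1\<^sub>m N" and b: "dagger B * B = 1\<^sub>m N" using assms by (auto simp: isoM_def)
  have dA: "dagger A \<in> carrier_mat N N" and dB: "dagger B \<in> carrier_mat N N"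
    using A B dagger_carrier by (metis carrier_matD)+
  have "dagger (A*B) * (A*B) = (dagger B * dagger A) * (A * B)" using dagger_mult[OF A B] by simp
  also have "\<dots> = dagger B * ((dagger A * A) * B)"
    using A B dA dB by (simp add: assoc_mult_mat[of _ N N _ N _ N])
  also have "\<dots> = 1\<^sub>m N" using a b B by simp
  finally show ?thesis using A B by (auto simp: isoM_def)
qed

lemma sum_even_odd: "(\<Sum>a<2*(N::nat). g a) = (\<Sum>a<N. g (2*a) + g (2*a+1))"
proof (induction N)
  case (Suc N)
  have "2 * Suc N = Suc (Suc (2*N))" by simp
  then show ?case using Suc by (simp add: algebra_simps)
qed simp

lemma bitval_2a: "bitval (2*a) 0 = 0" "bitval (2*a+1) 0 = 1" "bitval (Suc (2*a)) 0 = 1" "bitval (Suc (2*a)) (Suc i) = bitval a i"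
  "bitval (2*a) (Suc i) = bitval a i" "bitval (2*a+1) (Suc i) = bitval a i"
  by (auto simp: bitval_def bit_Suc bit_0)

lemma sum_prod_bits:
  fixes f :: "nat \<Rightarrow> nat \<Rightarrow> 'a::comm_semiring_1"
  shows "(\<Sum>a<2^n. \<Prod>i<n. f i (bitval a i)) = (\<Prod>i<n. f i 0 + f i 1)"
proof (induction n arbitrary: f)
  case 0 then show ?case by simp
next
  case (Suc n)
  have "(\<Sum>a<2^Suc n. \<Prod>i<Suc n. f i (bitval a i))
     = (\<Sum>a<2^n. f 0 0 * (\<Prod>i<n. f (Suc i) (bitval a i)) + f 0 1 * (\<Prod>i<n. f (Suc i) (bitval a i)))"
    by (simp add: sum_even_odd prod.lessThan_Suc_shift bitval_2a del: prod.lessThan_Suc)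
  also have "\<dots> = (f 0 0 + f 0 1) * (\<Sum>a<2^n. \<Prod>i<n. f (Suc i) (bitval a i))"
    by (simp add: algebra_simps sum.distrib sum_distrib_left)
  also have "\<dots> = (\<Prod>i<Suc n. f i 0 + f i 1)"
    using Suc[of "\<lambda>i. f (Suc i)"] by (simp add: prod.lessThan_Suc_shift del: prod.lessThan_Suc)
  finally show ?case .
qed

lemma bitval_lt2: "bitval a i < 2" by (simp add: bitval_def)

lemma bits_eq: assumes "b < 2^n" "c < 2^n" "\<forall>i<n. bitval b i = bitval c i" shows "b = c"
proof (rule bit_eqI)
  fix i show "bit b i = bit c i"
  proof (cases "i < n")
    case True then show ?thesis using assms(3) by (auto simp: bitval_def split: if_splits)
  next
    case False
    then have "bit b i = False" "bit c i = False" using assms(1,2)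
      by (metis bit_take_bit_iff take_bit_nat_eq_self_iff)+
    then show ?thesis by simp
  qed
qed



lemma xor_lt: "(b::nat) < 2^n \<Longrightarrow> x < 2^n \<Longrightarrow> xor b x < 2^n"
proof -
  assume "b < 2^n" "x < 2^n"
  then have "take_bit n b = b" "take_bit n x = x" by (simp_all add: take_bit_nat_eq_self_iff)
  then have "xor b x = take_bit n (xor b x)" by simp
  then show ?thesis by (metis take_bit_nat_less_exp)
qed

lemma xor_inj: "xor (b::nat) x = xor c x \<Longrightarrow> b = c"
  by (metis xor.assoc xor_self_eq xor.right_neutral)

lemma sum_single:
  fixes f :: "nat \<Rightarrow> complex"
  assumes "k < N"
  shows "(\<Sum>a<N. if a = k then f a else 0) = f k"
  using assms by simp

lemma pauli_iso:
  assumes e: "e \<in> paulis n" shows "isoM (2^n) (pauli n e)"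
proof -
  let ?N = "2^n::nat"
  obtain x z where ez: "e = (x,z)" by force
  have x: "x < ?N" using e ez by (simp add: paulis_def)
  define sg where "sg (b::nat) = ((-1::complex) ^ card {i. i < n \<and> bit b i \<and> bit z i})" for b
  have P: "\<And>a b. a < ?N \<Longrightarrow> b < ?N \<Longrightarrow> pauli n e $$ (a,b) = (if a = xor b x then sg b else 0)"
    by (simp add: pauli_def ez sg_def)
  have C: "pauli n e \<in> carrier_mat ?N ?N" by (simp add: pauli_def)
  have "dagger (pauli n e) * pauli n e = 1\<^sub>m ?N"
  proof (rule eq_matI)
    fix b c assume b: "b < dim_row (1\<^sub>m ?N)" and c: "c < dim_col (1\<^sub>m ?N)"
    then have b: "b < ?N" and c: "c < ?N" by auto
    have "(dagger (pauli n e) * pauli n e) $$ (b,c) = (\<Sum>a<?N. cnj (pauli n e $$ (a,b)) * pauli n e $$ (a,c))"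
      using b c C by (simp add: index_mult_mat scalar_prod_def atLeast0LessThan)
    also have "\<dots> = (\<Sum>a<?N. if a = xor b x then cnj (sg b) * (if a = xor c x then sg c else 0) else 0)"
      by (rule sum.cong) (use b c P in auto)
    also have "\<dots> = cnj (sg b) * (if xor b x = xor c x then sg c else 0)"
      using xor_lt[OF b x] by simp
    also have "\<dots> = (if b = c then 1 else 0)"
      using xor_inj[of b x c] by (auto simp: sg_def)
    finally show "(dagger (pauli n e) * pauli n e) $$ (b,c) = 1\<^sub>m ?N $$ (b,c)" using b c by simp
  qed (simp_all add: pauli_def)
  then show ?thesis using C by (simp add: isoM_def)
qed

lemma cz_iso: "isoM (2^n) (cz_mat n E)"
proof -
  let ?N = "2^n::nat"
  define sg where "sg (a::nat) = ((-1::complex) ^ card {(i,j)\<in>E. bit a i \<and> bit a j})" for a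
  have P: "\<And>a b. a < ?N \<Longrightarrow> b < ?N \<Longrightarrow> cz_mat n E $$ (a,b) = (if a = b then sg b else 0)"
    by (simp add: cz_mat_def sg_def)
  have C: "cz_mat n E \<in> carrier_mat ?N ?N" by (simp add: cz_mat_def)
  have "dagger (cz_mat n E) * cz_mat n E = 1\<^sub>m ?N"
  proof (rule eq_matI)
    fix b c assume b: "b < dim_row (1\<^sub>m ?N)" and c: "c < dim_col (1\<^sub>m ?N)"
    then have b: "b < ?N" and c: "c < ?N" by auto
    have "(dagger (cz_mat n E) * cz_mat n E) $$ (b,c) = (\<Sum>a<?N. cnj (cz_mat n E $$ (a,b)) * cz_mat n E $$ (a,c))"
      using b c C by (simp add: index_mult_mat scalar_prod_def atLeast0LessThan)
    also have "\<dots> = (\<Sum>a<?N. if a = b then cnj (sg b) * (if a = c then sg c else 0) else 0)"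
      by (rule sum.cong) (use b c P in auto)
    also have "\<dots> = cnj (sg b) * (if b = c then sg c else 0)"
      using b by simp
    also have "\<dots> = (if b = c then 1 else 0)"
      by (auto simp: sg_def)
    finally show "(dagger (cz_mat n E) * cz_mat n E) $$ (b,c) = 1\<^sub>m ?N $$ (b,c)" using b c by simp
  qed (simp_all add: cz_mat_def)
  then show ?thesis using C by (simp add: isoM_def)
qed

lemma prod_if01: "(\<Prod>i<(n::nat). if P i then 1 else (0::complex)) = (if \<forall>i<n. P i then 1 else 0)"
  by (induction n) (auto simp: less_Suc_eq)

lemma unitary_entries:
  assumes "one_qubit_unitary U" "p < 2" "r < 2"
  shows "cnj (U $$ (0,p)) * U $$ (0,r) + cnj (U $$ (1,p)) * U $$ (1,r) = (if p = r then 1 else 0)"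
proof -
  have U: "U \<in> carrier_mat 2 2" and UU: "U * dagger U = 1\<^sub>m 2"
    using assms by (auto simp: one_qubit_unitary_def)
  have dU: "dagger U \<in> carrier_mat 2 2" using U by (metis dagger_carrier carrier_matD)
  have "dagger U * U = 1\<^sub>m 2" using mat_mult_left_right_inverse[OF U dU UU] .
  then have "(dagger U * U) $$ (p,r) = (if p = r then 1 else 0)" using assms by simp
  moreover have "(dagger U * U) $$ (p,r) = cnj (U $$ (0,p)) * U $$ (0,r) + cnj (U $$ (1,p)) * U $$ (1,r)"
    using U assms by (simp add: index_mult_mat scalar_prod_def numeral_2_eq_2)
  ultimately show ?thesis by simp
qed

lemma cycle_iso:
  assumes u: "\<And>i. i < n \<Longrightarrow> one_qubit_unitary (u i)"
  shows "isoM (2^n) (cycle_mat n u)"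
proof -
  let ?N = "2^n::nat"
  have C: "cycle_mat n u \<in> carrier_mat ?N ?N" by (simp add: cycle_mat_def)
  have "dagger (cycle_mat n u) * cycle_mat n u = 1\<^sub>m ?N"
  proof (rule eq_matI)
    fix b c assume b: "b < dim_row (1\<^sub>m ?N)" and c: "c < dim_col (1\<^sub>m ?N)"
    then have b: "b < ?N" and c: "c < ?N" by auto
    define f where "f i t = cnj (u i $$ (t, bitval b i)) * u i $$ (t, bitval c i)" for i t
    have "(dagger (cycle_mat n u) * cycle_mat n u) $$ (b,c)
        = (\<Sum>a<?N. cnj (cycle_mat n u $$ (a,b)) * cycle_mat n u $$ (a,c))"
      using b c C by (simp add: index_mult_mat scalar_prod_def atLeast0LessThan)
    also have "\<dots> = (\<Sum>a<?N. \<Prod>i<n. f i (bitval a i))"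
      by (rule sum.cong) (use b c in \<open>auto simp: cycle_mat_def f_def prod.distrib\<close>)
    also have "\<dots> = (\<Prod>i<n. f i 0 + f i 1)" by (rule sum_prod_bits)
    also have "\<dots> = (\<Prod>i<n. if bitval b i = bitval c i then 1 else 0)"
    proof (rule prod.cong[OF refl])
      fix i assume "i \<in> {..<n}"
      then have "i < n" by simp
      then show "f i 0 + f i 1 = (if bitval b i = bitval c i then 1 else 0)"
        unfolding f_def by (rule unitary_entries[OF u bitval_lt2 bitval_lt2])
    qed
    also have "\<dots> = (if b = c then 1 else 0)"
      using bits_eq[OF b c] by (auto simp: prod_if01)
    finally show "(dagger (cycle_mat n u) * cycle_mat n u) $$ (b,c) = 1\<^sub>m ?N $$ (b,c)" using b c by simp
  qed (simp_all add: cycle_mat_def)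
  then show ?thesis using C by (simp add: isoM_def)
qed

lemma circ_iso:
  assumes u: "\<And>j i. j \<in> {1..m} \<Longrightarrow> i < n \<Longrightarrow> one_qubit_unitary (u j i)"
    and P: "\<And>j. j \<le> m \<Longrightarrow> Ps j \<in> paulis n"
  shows "isoM (2^n) (circ_op n E u Ps m)"
  using assms
proof (induction m)
  case 0 then show ?case by (simp add: pauli_iso)
next
  case (Suc m)
  have "isoM (2^n) (circ_op n E u Ps m)" using Suc by auto
  moreover have "isoM (2^n) (cycle_mat n (u (Suc m)))" using Suc.prems(1) by (auto intro!: cycle_iso)
  moreover have "isoM (2^n) (pauli n (Ps (Suc m)))" using Suc.prems(2) by (auto intro!: pauli_iso)
  ultimately show ?case by (simp add: iso_mult cz_iso)
qed

lemma circ_op_cong: "(\<And>j. j \<le> m \<Longrightarrow> Ps j = Qs j) \<Longrightarrow> circ_op n E u Ps m = circ_op n E u Qs m"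
  by (induction m) auto

lemma rho0_dims[simp]: "dim_row (rho0 n) = 2^n" "dim_col (rho0 n) = 2^n"
  by (simp_all add: rho0_def)

lemma out_entry:
  assumes C: "C \<in> carrier_mat (2^n) (2^n)" and s: "s < 2^n"
  shows "(C * rho0 n * dagger C) $$ (s,s) = C $$ (s,0) * cnj (C $$ (s,0))"
proof -
  let ?N = "2^n::nat"
  have r: "(C * rho0 n) $$ (s,k) = (if k = 0 then C $$ (s,0) else 0)" if k: "k < ?N" for k
  proof -
    have "(C * rho0 n) $$ (s,k) = (\<Sum>j<?N. C $$ (s,j) * rho0 n $$ (j,k))"
      using C s k by (simp add: index_mult_mat scalar_prod_def atLeast0LessThan rho0_def)
    also have "\<dots> = (\<Sum>j<?N. if j = 0 then (if k = 0 then C $$ (s,0) else 0) else 0)"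
      by (rule sum.cong) (use k in \<open>auto simp: rho0_def\<close>)
    finally show ?thesis by simp
  qed
  have CR: "C * rho0 n \<in> carrier_mat ?N ?N" using C by (simp add: rho0_def)
  have "(C * rho0 n * dagger C) $$ (s,s) = (\<Sum>k<?N. (C * rho0 n) $$ (s,k) * dagger C $$ (k,s))"
    using CR C s by (simp add: index_mult_mat scalar_prod_def atLeast0LessThan carrier_matD[OF CR])
  also have "\<dots> = (\<Sum>k<?N. if k = 0 then C $$ (s,0) * cnj (C $$ (s,0)) else 0)"
    by (rule sum.cong) (use C s r in auto)
  finally show ?thesis by simp
qed

lemma D_eq:
  assumes "isoM (2^n) C" "s < 2^n"
  shows "outprob (C * rho0 n * dagger C) s = (cmod (C $$ (s,0)))^2"
proof -
  have "C \<in> carrier_mat (2^n) (2^n)" using assms by (simp add: isoM_def)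
  then have "(C * rho0 n * dagger C) $$ (s,s) = C $$ (s,0) * cnj (C $$ (s,0))"
    using out_entry assms(2) by blast
  also have "\<dots> = of_real ((cmod (C $$ (s,0)))^2)" by (rule complex_norm_square[symmetric])
  finally have "(C * rho0 n * dagger C) $$ (s,s) = of_real ((cmod (C $$ (s,0)))^2)" .
  then show ?thesis by (simp add: outprob_def)
qed

lemma D_sum:
  assumes "isoM (2^n) C"
  shows "(\<Sum>s<2^n. outprob (C * rho0 n * dagger C) s) = 1"
proof -
  have C: "C \<in> carrier_mat (2^n) (2^n)" and I: "dagger C * C = 1\<^sub>m (2^n)" using assms by (auto simp: isoM_def)
  have "(dagger C * C) $$ (0,0) = (\<Sum>s<2^n. cnj (C $$ (s,0)) * C $$ (s,0))"
    using C by (simp add: index_mult_mat scalar_prod_def atLeast0LessThan)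
  also have "\<dots> = (\<Sum>s<2^n. of_real ((cmod (C $$ (s,0)))^2))"
    by (intro sum.cong refl) (metis complex_norm_square mult.commute)
  also have "\<dots> = of_real (\<Sum>s<2^n. (cmod (C $$ (s,0)))^2)"
    by (simp only: of_real_sum)
  finally have "of_real (\<Sum>s<2^n. (cmod (C $$ (s,0)))^2) = (1::complex)" using I by simp
  then have "(\<Sum>s<2^n. (cmod (C $$ (s,0)))^2) = 1" by (metis of_real_eq_1_iff)
  then show ?thesis using D_eq[OF assms] by simp
qed

lemma D_nonneg: "isoM (2^n) C \<Longrightarrow> s < 2^n \<Longrightarrow> outprob (C * rho0 n * dagger C) s \<ge> 0"
  by (simp add: D_eq)

lemma D_rest:
  assumes "isoM (2^n) C"
  shows "(\<Sum>s\<in>{1..<2^n}. outprob (C * rho0 n * dagger C) s) = 1 - outprob (C * rho0 n * dagger C) 0"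
proof -
  have "(\<Sum>s<2^n. outprob (C * rho0 n * dagger C) s)
      = outprob (C * rho0 n * dagger C) 0 + (\<Sum>s\<in>{1..<2^n}. outprob (C * rho0 n * dagger C) s)"
    by (simp add: atLeast0LessThan[symmetric] sum.atLeast_Suc_lessThan)
  then show ?thesis using D_sum[OF assms] by simp
qed

lemma inc_bounds:
  assumes "isoM (2^n) (circ_op n E u Ps m)"
  shows "0 \<le> inc_prob n m E u Ps" "inc_prob n m E u Ps \<le> 1"
    "inc_prob n m E u Ps = 1 - outprob (circ_op n E u Ps m * rho0 n * dagger (circ_op n E u Ps m)) 0"
proof -
  let ?C = "circ_op n E u Ps m"
  have e: "inc_prob n m E u Ps = 1 - outprob (?C * rho0 n * dagger ?C) 0"
    unfolding inc_prob_def using D_rest[OF assms] .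
  then show "inc_prob n m E u Ps = 1 - outprob (?C * rho0 n * dagger ?C) 0" .
  have "0 \<le> (\<Sum>s\<in>{1..<2^n}. outprob (?C * rho0 n * dagger ?C) s)"
    by (rule sum_nonneg) (use D_nonneg[OF assms] in auto)
  then show "0 \<le> inc_prob n m E u Ps" by (simp add: inc_prob_def)
  show "inc_prob n m E u Ps \<le> 1" using e D_nonneg[OF assms, of 0] by simp
qed



lemma finite_patterns: "finite (patterns n m)"
  by (simp add: patterns_def paulis_def finite_PiE)

lemma pp_nonneg:
  assumes "\<And>j e. j \<le> m \<Longrightarrow> e \<in> paulis n \<Longrightarrow> q j e \<ge> 0" "Ps \<in> patterns n m"
  shows "0 \<le> pat_prob q m Ps"
  unfolding pat_prob_def
proof (rule prod_nonneg)
  fix j assume j: "j \<in> {..m}"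
  then have "Ps j \<in> paulis n" using assms(2) by (auto simp: patterns_def PiE_iff)
  then show "0 \<le> q j (Ps j)" using assms(1) j by simp
qed

lemma pp_sum:
  assumes "\<And>j. j \<le> m \<Longrightarrow> (\<Sum>e\<in>paulis n. q j e) = 1"
  shows "(\<Sum>Ps\<in>patterns n m. pat_prob q m Ps) = 1"
proof -
  have "(\<Sum>Ps\<in>patterns n m. pat_prob q m Ps) = (\<Prod>j\<in>{0..m}. \<Sum>e\<in>paulis n. q j e)"
    unfolding patterns_def pat_prob_def atLeast0AtMost
    by (rule prod_sum_PiE[symmetric]) (auto simp: paulis_def)
  also have "\<dots> = 1" using assms by simp
  finally show ?thesis .
qed

lemma patterns_paulis: "Ps \<in> patterns n m \<Longrightarrow> j \<le> m \<Longrightarrow> Ps j \<in> paulis n"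
  by (auto simp: patterns_def)

lemma no_err_paulis: "no_err j \<in> paulis n"
  by (simp add: no_err_def paulis_def)

lemma id_pattern: "\<not> nonid_pattern m Ps \<Longrightarrow> circ_op n E u Ps m = ideal_op n E u m"
  unfolding ideal_op_def nonid_pattern_def
  by (rule circ_op_cong) (auto simp: no_err_def)

lemma wsum_bounds:
  assumes qn: "\<And>j e. j \<le> m \<Longrightarrow> e \<in> paulis n \<Longrightarrow> q j e \<ge> 0"
    and qs: "\<And>j. j \<le> m \<Longrightarrow> (\<Sum>e\<in>paulis n. q j e) = 1"
    and S: "S \<subseteq> patterns n m" and w: "\<And>Ps. Ps \<in> S \<Longrightarrow> 0 \<le> w Ps \<and> w Ps \<le> 1"
  shows "\<bar>\<Sum>Ps\<in>S. pat_prob q m Ps * w Ps\<bar> \<le> 1"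
proof -
  have pn: "\<And>Ps. Ps \<in> S \<Longrightarrow> 0 \<le> pat_prob q m Ps" using S pp_nonneg[OF qn] by auto
  have fS: "finite S" using S finite_patterns finite_subset by blast
  have "0 \<le> (\<Sum>Ps\<in>S. pat_prob q m Ps * w Ps)" using pn w by (auto intro!: sum_nonneg)
  moreover have "(\<Sum>Ps\<in>S. pat_prob q m Ps * w Ps) \<le> (\<Sum>Ps\<in>S. pat_prob q m Ps)"
    using pn w by (auto intro!: sum_mono mult_left_le)
  moreover have "(\<Sum>Ps\<in>S. pat_prob q m Ps) \<le> (\<Sum>Ps\<in>patterns n m. pat_prob q m Ps)"
    using S pp_nonneg[OF qn] by (intro sum_mono2 finite_patterns) auto
  ultimately show ?thesis using pp_sum[OF qs] by simp
qed

lemma integrable_w: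
  assumes qn: "\<And>j e. j \<le> m \<Longrightarrow> e \<in> paulis n \<Longrightarrow> q j e \<ge> 0"
    and qs: "\<And>j. j \<le> m \<Longrightarrow> (\<Sum>e\<in>paulis n. q j e) = 1"
    and S: "\<And>u. S u \<subseteq> patterns n m"
    and w: "\<And>u Ps. u \<in> set_pmf mu \<Longrightarrow> Ps \<in> S u \<Longrightarrow> 0 \<le> w u Ps \<and> w u Ps \<le> 1"
  shows "integrable (measure_pmf mu) (\<lambda>u. \<Sum>Ps\<in>S u. pat_prob q m Ps * w u Ps)"
proof (rule measure_pmf.integrable_const_bound[where B=1])
  show "AE u in measure_pmf mu. norm (\<Sum>Ps\<in>S u. pat_prob q m Ps * w u Ps) \<le> 1"
    unfolding AE_measure_pmf_iff real_norm_def
  proof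
    fix u assume u: "u \<in> set_pmf mu"
    show "\<bar>\<Sum>Ps\<in>S u. pat_prob q m Ps * w u Ps\<bar> \<le> 1"
    proof (rule wsum_bounds[OF qn qs S[of u]])
      fix Ps assume Ps: "Ps \<in> S u"
      show "0 \<le> w u Ps \<and> w u Ps \<le> 1" using w[OF u Ps] .
    qed
  qed
qed simp

theorem mainTheorem3:
  fixes n m :: nat
    and q :: "nat \<Rightarrow> (nat \<times> nat) \<Rightarrow> real"
    and E :: "nat \<Rightarrow> (nat \<times> nat) set"
    and Ut :: "nat \<Rightarrow> nat \<Rightarrow> complex mat"
    and mu :: "(nat \<Rightarrow> nat \<Rightarrow> complex mat) pmf"
  assumes q_nonneg: "\<And>j e. j \<le> m \<Longrightarrow> e \<in> paulis n \<Longrightarrow> q j e \<ge> 0"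
    and q_sum: "\<And>j. j \<le> m \<Longrightarrow> (\<Sum>e\<in>paulis n. q j e) = 1"
    and cz: "\<And>j. j \<in> {1..m} \<Longrightarrow> cz_cycle n (E j)"
    and target_gates: "\<And>j i. j \<in> {1..m} \<Longrightarrow> i < n \<Longrightarrow> one_qubit_unitary (Ut j i)"
    and trap_clifford: "\<And>u j i. u \<in> set_pmf mu \<Longrightarrow> j \<in> {1..m} \<Longrightarrow> i < n \<Longrightarrow>
                          one_qubit_clifford (u j i)"
    and trap_ideal: "\<And>u. u \<in> set_pmf mu \<Longrightarrow> outprob (ideal_out n m E u) 0 = 1"
    and canc_lt1: "p_canc n m q E mu < 1"
    and detect: "measure_pmf.expectation mu (\<lambda>u.
          \<Sum>Ps\<in>{Ps\<in>patterns n m. net_error n m E u Ps \<noteq> (0,0)}.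
             pat_prob q m Ps * inc_prob n m E u Ps)
        \<ge> (1/2) * measure_pmf.expectation mu (\<lambda>u.
          \<Sum>Ps\<in>{Ps\<in>patterns n m. net_error n m E u Ps \<noteq> (0,0)}. pat_prob q m Ps)"
  shows "p_inc n m q E mu \<ge> p_err n m q * (1 - p_canc n m q E mu) / 2
    \<and> (1/2) * (\<Sum>s<2^n. \<bar>outprob (ideal_out n m E Ut) s - outprob (noisy_out n m q E Ut) s\<bar>)
        \<le> p_err n m q
    \<and> p_err n m q \<le> 2 * p_inc n m q E mu / (1 - p_canc n m q E mu)
    \<and> 2 * p_inc n m q E mu \<le> 2 * p_err n m q"
proof -
  let ?pat = "patterns n m"
  let ?pp = "pat_prob q m"
  let ?M = "measure_pmf mu"
  define perr where "perr = p_err n m q"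
  have ppn: "0 \<le> ?pp Ps" if "Ps \<in> ?pat" for Ps
    by (rule pp_nonneg) (use q_nonneg that in auto)
  have fin: "finite ?pat" by (rule finite_patterns)
  have trap_iso: "isoM (2^n) (circ_op n E u Ps m)" if "u \<in> set_pmf mu" "Ps \<in> ?pat" for u Ps
    using that trap_clifford by (intro circ_iso) (auto simp: one_qubit_clifford_def patterns_paulis)
  have inc01: "0 \<le> inc_prob n m E u Ps \<and> inc_prob n m E u Ps \<le> 1" if "u \<in> set_pmf mu" "Ps \<in> ?pat" for u Ps
    using inc_bounds[OF trap_iso[OF that]] by simp
  have inc_id: "inc_prob n m E u Ps = 0" if "u \<in> set_pmf mu" "Ps \<in> ?pat" "\<not> nonid_pattern m Ps" for u Ps
    using inc_bounds(3)[OF trap_iso[OF that(1,2)]] trap_ideal[OF that(1)] id_pattern[OF that(3)]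
    by (simp add: ideal_out_def)
  define f where "f u = (\<Sum>Ps\<in>?pat. ?pp Ps * inc_prob n m E u Ps)" for u
  define g where "g u = (\<Sum>Ps\<in>{Ps\<in>?pat. net_error n m E u Ps \<noteq> (0,0)}. ?pp Ps * inc_prob n m E u Ps)" for u
  define h where "h u = (\<Sum>Ps\<in>{Ps\<in>?pat. net_error n m E u Ps \<noteq> (0,0)}. ?pp Ps)" for u
  define k where "k u = (\<Sum>Ps\<in>{Ps\<in>?pat. nonid_pattern m Ps \<and> net_error n m E u Ps = (0,0)}. ?pp Ps)" for u
  have intf: "integrable ?M f" unfolding f_def
    by (rule integrable_w[OF q_nonneg q_sum]) (auto simp add: inc01)
  have intg: "integrable ?M g" unfolding g_def
    by (rule integrable_w[OF q_nonneg q_sum]) (auto simp add: inc01)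
  have inth: "integrable ?M h"
    using integrable_w[OF q_nonneg q_sum, where S="\<lambda>u. {Ps\<in>?pat. net_error n m E u Ps \<noteq> (0,0)}" and mu=mu and w="\<lambda>_ _. 1"]
    unfolding h_def by auto
  have intk: "integrable ?M k"
    using integrable_w[OF q_nonneg q_sum, where S="\<lambda>u. {Ps\<in>?pat. nonid_pattern m Ps \<and> net_error n m E u Ps = (0,0)}" and mu=mu and w="\<lambda>_ _. 1"]
    unfolding k_def by auto
  have pinc: "p_inc n m q E mu = integral\<^sup>L ?M f" unfolding p_inc_def f_def[abs_def] by simp
  have pcanc: "p_canc n m q E mu = integral\<^sup>L ?M k / perr" unfolding p_canc_def k_def[abs_def] perr_def by simp
  have det: "integral\<^sup>L ?M g \<ge> (1/2) * integral\<^sup>L ?M h" using detect unfolding g_def[abs_def] h_def[abs_def] by simp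
  have perr_nonneg: "0 \<le> perr" unfolding perr_def p_err_def using ppn by (auto intro!: sum_nonneg)
  have fg: "integral\<^sup>L ?M g \<le> integral\<^sup>L ?M f"
  proof (rule integral_mono_AE[OF intg intf])
    show "AE u in ?M. g u \<le> f u"
      unfolding AE_measure_pmf_iff g_def f_def
      using ppn inc01 by (auto intro!: sum_mono2[OF fin] mult_nonneg_nonneg)
  qed
  have hk: "h u + k u \<ge> perr" for u
  proof -
    let ?A1 = "{Ps\<in>?pat. nonid_pattern m Ps \<and> net_error n m E u Ps \<noteq> (0,0)}"
    let ?A2 = "{Ps\<in>?pat. nonid_pattern m Ps \<and> net_error n m E u Ps = (0,0)}"
    have eq: "{Ps\<in>?pat. nonid_pattern m Ps} = ?A1 \<union> ?A2" by auto
    have "perr = sum ?pp (?A1 \<union> ?A2)" unfolding perr_def p_err_def eq by (rule refl)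
    also have "\<dots> = sum ?pp ?A1 + sum ?pp ?A2"
    proof (rule sum.union_disjoint)
      show "finite ?A1" using fin by simp
      show "finite ?A2" using fin by simp
    qed auto
    finally have split: "perr = sum ?pp ?A1 + sum ?pp ?A2" .
    have s1: "sum ?pp ?A1 \<le> h u" unfolding h_def
    proof (rule sum_mono2)
      show "finite {Ps\<in>?pat. net_error n m E u Ps \<noteq> (0,0)}" using fin by simp
      show "?A1 \<subseteq> {Ps\<in>?pat. net_error n m E u Ps \<noteq> (0,0)}" by blast
      fix b assume "b \<in> {Ps\<in>?pat. net_error n m E u Ps \<noteq> (0,0)} - ?A1"
      then have "b \<in> ?pat" by blast
      then show "0 \<le> ?pp b" by (rule ppn)
    qed
    have s2: "k u = sum ?pp ?A2" by (simp only: k_def)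
    show ?thesis using s1 s2 split by linarith
  qed
  have hk2: "integral\<^sup>L ?M h + integral\<^sup>L ?M k \<ge> perr"
  proof -
    have "perr = integral\<^sup>L ?M (\<lambda>_. perr)" by simp
    also have "\<dots> \<le> integral\<^sup>L ?M (\<lambda>u. h u + k u)"
      by (rule integral_mono_AE) (use inth intk hk in auto)
    also have "\<dots> = integral\<^sup>L ?M h + integral\<^sup>L ?M k" using inth intk by simp
    finally show ?thesis .
  qed
  have h0: "integral\<^sup>L ?M h \<ge> 0"
    by (rule integral_nonneg_AE) (auto simp: h_def AE_measure_pmf_iff intro!: sum_nonneg ppn)
  have c1: "p_inc n m q E mu \<ge> perr * (1 - p_canc n m q E mu) / 2"
  proof (cases "perr = 0")
    case True
    then show ?thesis using pinc fg det h0 by simp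
  next
    case False
    then have "perr * (1 - p_canc n m q E mu) = perr - integral\<^sup>L ?M k"
      using pcanc by (simp add: field_simps)
    then show ?thesis using pinc fg det hk2 by simp
  qed
  have c3: "perr \<le> 2 * p_inc n m q E mu / (1 - p_canc n m q E mu)"
    using c1 canc_lt1 by (simp add: pos_le_divide_eq mult.commute)
  have c4: "p_inc n m q E mu \<le> perr"
  proof -
    have "integral\<^sup>L ?M f \<le> integral\<^sup>L ?M (\<lambda>_. perr)"
    proof (rule integral_mono_AE[OF intf])
      show "integrable ?M (\<lambda>_. perr)" by simp
      show "AE u in ?M. f u \<le> perr" unfolding AE_measure_pmf_iff
      proof
        fix u assume u: "u \<in> set_pmf mu"
        have "f u \<le> (\<Sum>Ps\<in>?pat. if nonid_pattern m Ps then ?pp Ps else 0)"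
          unfolding f_def
        proof (rule sum_mono)
          fix Ps assume Ps: "Ps \<in> ?pat"
          show "?pp Ps * inc_prob n m E u Ps \<le> (if nonid_pattern m Ps then ?pp Ps else 0)"
            using inc01[OF u Ps] inc_id[OF u Ps] ppn[OF Ps] by (auto intro: mult_left_le)
        qed
        also have "\<dots> = perr" unfolding perr_def p_err_def using fin by (simp add: sum.inter_filter)
        finally show "f u \<le> perr" .
      qed
    qed
    then show ?thesis using pinc by simp
  qed
  let ?D = "\<lambda>Ps s. outprob (circ_op n E Ut Ps m * rho0 n * dagger (circ_op n E Ut Ps m)) s"
  have tiso: "isoM (2^n) (circ_op n E Ut Ps m)" if "\<And>j. j \<le> m \<Longrightarrow> Ps j \<in> paulis n" for Ps
    using that target_gates by (intro circ_iso) auto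
  have iso0: "isoM (2^n) (circ_op n E Ut no_err m)" by (rule tiso) (rule no_err_paulis)
  have ideal_eq: "outprob (ideal_out n m E Ut) s = ?D no_err s" for s
    by (simp add: ideal_out_def ideal_op_def)
  have noisy_eq: "outprob (noisy_out n m q E Ut) s = (\<Sum>Ps\<in>?pat. ?pp Ps * ?D Ps s)" if "s < 2^n" for s
    using that by (simp add: noisy_out_def outprob_def Re_sum)
  have diff: "\<bar>outprob (ideal_out n m E Ut) s - outprob (noisy_out n m q E Ut) s\<bar>
      \<le> (\<Sum>Ps\<in>?pat. ?pp Ps * \<bar>?D no_err s - ?D Ps s\<bar>)" if "s < 2^n" for s
  proof -
    have eqd: "outprob (ideal_out n m E Ut) s - outprob (noisy_out n m q E Ut) s
        = (\<Sum>Ps\<in>?pat. ?pp Ps * (?D no_err s - ?D Ps s))"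
    proof -
      have e1: "(\<Sum>Ps\<in>?pat. ?pp Ps * ?D no_err s) = ?D no_err s"
      proof -
        have "(\<Sum>Ps\<in>?pat. ?pp Ps * ?D no_err s) = (\<Sum>Ps\<in>?pat. ?pp Ps) * ?D no_err s"
          by (rule sum_distrib_right[symmetric])
        then show ?thesis using pp_sum[OF q_sum] by simp
      qed
      have "outprob (ideal_out n m E Ut) s - outprob (noisy_out n m q E Ut) s
          = (\<Sum>Ps\<in>?pat. ?pp Ps * ?D no_err s) - (\<Sum>Ps\<in>?pat. ?pp Ps * ?D Ps s)"
        by (simp only: e1 ideal_eq noisy_eq[OF that])
      also have "\<dots> = (\<Sum>Ps\<in>?pat. ?pp Ps * ?D no_err s - ?pp Ps * ?D Ps s)"
        by (rule sum_subtractf[symmetric])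
      also have "\<dots> = (\<Sum>Ps\<in>?pat. ?pp Ps * (?D no_err s - ?D Ps s))"
        by (simp only: right_diff_distrib)
      finally show ?thesis .
    qed
    have "\<bar>outprob (ideal_out n m E Ut) s - outprob (noisy_out n m q E Ut) s\<bar>
        \<le> (\<Sum>Ps\<in>?pat. \<bar>?pp Ps * (?D no_err s - ?D Ps s)\<bar>)" unfolding eqd by (rule sum_abs)
    also have "\<dots> = (\<Sum>Ps\<in>?pat. ?pp Ps * \<bar>?D no_err s - ?D Ps s\<bar>)"
      by (rule sum.cong[OF refl]) (simp add: abs_mult abs_of_nonneg[OF ppn])
    finally show ?thesis .
  qed
  have per: "(\<Sum>s<2^n. \<bar>?D no_err s - ?D Ps s\<bar>) \<le> (if nonid_pattern m Ps then 2 else 0)"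
    if Ps: "Ps \<in> ?pat" for Ps
  proof (cases "nonid_pattern m Ps")
    case False
    then show ?thesis using id_pattern[OF False] by (simp add: ideal_op_def)
  next
    case True
    have isoP: "isoM (2^n) (circ_op n E Ut Ps m)" using Ps by (intro tiso) (auto simp: patterns_paulis)
    have "(\<Sum>s<2^n. \<bar>?D no_err s - ?D Ps s\<bar>) \<le> (\<Sum>s<2^n. ?D no_err s + ?D Ps s)"
      using D_nonneg[OF iso0] D_nonneg[OF isoP] by (intro sum_mono) (simp add: abs_le_iff)
    also have "\<dots> = 2" using D_sum[OF iso0] D_sum[OF isoP] by (simp add: sum.distrib)
    finally show ?thesis using True by simp
  qed
  have c2: "(\<Sum>s<2^n. \<bar>outprob (ideal_out n m E Ut) s - outprob (noisy_out n m q E Ut) s\<bar>) \<le> 2 * perr"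
  proof -
    have "(\<Sum>s<2^n. \<bar>outprob (ideal_out n m E Ut) s - outprob (noisy_out n m q E Ut) s\<bar>)
        \<le> (\<Sum>s<2^n. \<Sum>Ps\<in>?pat. ?pp Ps * \<bar>?D no_err s - ?D Ps s\<bar>)"
      by (rule sum_mono) (rule diff, simp)
    also have "\<dots> = (\<Sum>Ps\<in>?pat. ?pp Ps * (\<Sum>s<2^n. \<bar>?D no_err s - ?D Ps s\<bar>))"
      by (subst sum.swap) (simp only: sum_distrib_left)
    also have "\<dots> \<le> (\<Sum>Ps\<in>?pat. if nonid_pattern m Ps then 2 * ?pp Ps else 0)"
    proof (rule sum_mono)
      fix Ps assume Ps: "Ps \<in> ?pat"
      have "?pp Ps * (\<Sum>s<2^n. \<bar>?D no_err s - ?D Ps s\<bar>) \<le> ?pp Ps * (if nonid_pattern m Ps then 2 else 0)"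
        by (rule mult_left_mono[OF per[OF Ps] ppn[OF Ps]])
      then show "?pp Ps * (\<Sum>s<2^n. \<bar>?D no_err s - ?D Ps s\<bar>) \<le> (if nonid_pattern m Ps then 2 * ?pp Ps else 0)"
        by (cases "nonid_pattern m Ps") (simp_all add: mult.commute)
    qed
    also have "\<dots> = 2 * (\<Sum>Ps\<in>?pat. if nonid_pattern m Ps then ?pp Ps else 0)"
      unfolding sum_distrib_left by (rule sum.cong) auto
    also have "\<dots> = 2 * perr" unfolding perr_def p_err_def using fin
      by (simp add: sum.inter_filter)
    finally show ?thesis .
  qed
  show ?thesis using c1 c2 c3 c4 by (simp add: perr_def)
qed

end
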